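(* Let $S$ be a closed densely defined symmetric operator in a separable Hilbert space $\mathfrak H$ with equal nonzero defect numbers. Then $S$ is a Phillips symmetric operator if and only if $$\mathfrak N_\lambda\subset \mathcal D(S)\dotplus \mathfrak N_\mu\quad\text{for all }\lambda,\mu\in\mathbb C_+ .$$
   Context: $\mathbb C_\pm$ denote the open upper/lower half planes. For a closed densely defined symmetric operator $S$ in $\mathfrak H$, $\mathfrak N_\lambda=\ker(S^*-\lambda I)$, $\lambda\in\mathbb C\setminus\mathbb R$, are its defect subspaces, and its defect numbers are $\langle\dim\mathfrak N_i,\dim\mathfrak N_{-i}\rangle$; $\dotplus$ denotes a (non-orthogonal) direct sum. A boundary triplet of $S^*$ is $(\mathcal H,\Gamma_-,\Gamma_+)$, where $\mathcal H$ is a Hilbert space and $\Gamma_\pm:\mathcal D(S^* )\to\mathcal H$ are linear maps with $(S^*f,g)-(f,S^*g)=i[(\Gamma_+f,\Gamma_+g)_{\mathcal H}-(\Gamma_-f,\Gamma_-g)_{\mathcal H}]$ for all $f,g\in\mathcal D(S^* )$ and $(\Gamma_-,\Gamma_+):\mathcal D(S^* )\to\mathcal H\oplus\mathcal H$ surjective. For $\lambda\in\mathbb C_+$ let $A_\lambda=S^*\upharpoonright_{\mathcal D(S)\dotplus\mathfrak N_\lambda}$; there is a bounded operator $\Theta(\lambda)$ in $\mathcal H$ such that $\mathcal D(A_\lambda)=\{f\in\mathcal D(S^* ):\Theta(\lambda)\Gamma_+f=\Gamma_-f\}$; $\Theta(\cdot)$ is called the characteristic function of $S$ associated with the triplet.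 A closed densely defined symmetric operator with equal nonzero defect numbers is called a Phillips symmetric operator (PSO) if its characteristic function is constant on $\mathbb C_+$ (this property does not depend on the choice of boundary triplet). *)

theory Defs
  imports "HOL-Analysis.Analysis"
begin

text \<open>HOL-Analysis only provides real inner product spaces, so we introduce complex
Hilbert spaces as a type class: a real Banach space with a compatible complex scalar
multiplication and a complex inner product (linear in the first argument) inducing the norm.\<close>

class chilbert = banach +
  fixes scaleC :: "complex \<Rightarrow> 'a \<Rightarrow> 'a"
    and cinner :: "'a \<Rightarrow> 'a \<Rightarrow> complex"
  assumes scaleC_of_real: "scaleC (complex_of_real r) x = scaleR r x"
    and scaleC_add_right: "scaleC a (x + y) = scaleC a x + scaleC a y"
    and scaleC_add_left: "scaleC (a + b) x = scaleC a x + scaleC b x"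
    and scaleC_mult: "scaleC (a * b) x = scaleC a (scaleC b x)"
    and scaleC_one: "scaleC 1 x = x"
    and cinner_commute: "cinner x y = cnj (cinner y x)"
    and cinner_add_left: "cinner (x + y) z = cinner x z + cinner y z"
    and cinner_scaleC_left: "cinner (scaleC a x) y = a * cinner x y"
    and cinner_self_real: "Im (cinner x x) = 0"
    and norm_eq_sqrt_cinner: "norm x = sqrt (Re (cinner x x))"

definition csubspace :: "'a::chilbert set \<Rightarrow> bool" where
  "csubspace V \<longleftrightarrow> 0 \<in> V \<and> (\<forall>x\<in>V. \<forall>y\<in>V. x + y \<in> V) \<and> (\<forall>a. \<forall>x\<in>V. scaleC a x \<in> V)"

definition cspan :: "'a::chilbert set \<Rightarrow> 'a set" where
  "cspan B = {x. \<exists>F c. finite F \<and> F \<subseteq> B \<and> x = (\<Sum>b\<in>F. scaleC (c b) b)}"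

definition orthonormal_basis_of :: "'a::chilbert set \<Rightarrow> 'a set \<Rightarrow> bool" where
  "orthonormal_basis_of B V \<longleftrightarrow> B \<subseteq> V \<and> (\<forall>b\<in>B. cinner b b = 1)
     \<and> (\<forall>b\<in>B. \<forall>b'\<in>B. b \<noteq> b' \<longrightarrow> cinner b b' = 0) \<and> closure (cspan B) = V"

definition same_hilbert_dim :: "'a::chilbert set \<Rightarrow> 'a set \<Rightarrow> bool" where
  "same_hilbert_dim V W \<longleftrightarrow> (\<exists>B1 B2 g. orthonormal_basis_of B1 V \<and> orthonormal_basis_of B2 W
      \<and> bij_betw g B1 B2)"

definition separable_space :: "'a::chilbert itself \<Rightarrow> bool" where
  "separable_space _ \<longleftrightarrow> (\<exists>C::'a set. countable C \<and> closure C = UNIV)"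

text \<open>An operator is a pair (domain, action); the action outside the domain is irrelevant.\<close>
type_synonym 'a op = "'a set \<times> ('a \<Rightarrow> 'a)"

definition linear_op :: "'a::chilbert op \<Rightarrow> bool" where
  "linear_op S \<longleftrightarrow> csubspace (fst S) \<and>
     (\<forall>x\<in>fst S. \<forall>y\<in>fst S. snd S (x + y) = snd S x + snd S y) \<and>
     (\<forall>a. \<forall>x\<in>fst S. snd S (scaleC a x) = scaleC a (snd S x))"

definition densely_defined :: "'a::chilbert op \<Rightarrow> bool" where
  "densely_defined S \<longleftrightarrow> closure (fst S) = UNIV"

definition closed_op :: "'a::chilbert op \<Rightarrow> bool" where
  "closed_op S \<longleftrightarrow> closed {(f, snd S f) | f. f \<in> fst S}"

definition symmetric_op :: "'a::chilbert op \<Rightarrow> bool" where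
  "symmetric_op S \<longleftrightarrow> (\<forall>f\<in>fst S. \<forall>g\<in>fst S. cinner (snd S f) g = cinner f (snd S g))"

text \<open>The adjoint \<open>S\<^sup>*\<close> (well defined for densely defined \<open>S\<close>).\<close>
definition adj_dom :: "'a::chilbert op \<Rightarrow> 'a set" where
  "adj_dom S = {g. \<exists>h. \<forall>f\<in>fst S. cinner (snd S f) g = cinner f h}"

definition adj_fun :: "'a::chilbert op \<Rightarrow> 'a \<Rightarrow> 'a" where
  "adj_fun S g = (THE h. \<forall>f\<in>fst S. cinner (snd S f) g = cinner f h)"

definition defect_space :: "'a::chilbert op \<Rightarrow> complex \<Rightarrow> 'a set" where
  "defect_space S l = {g \<in> adj_dom S. adj_fun S g = scaleC l g}"

definition equal_nonzero_defect_numbers :: "'a::chilbert op \<Rightarrow> bool" where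
  "equal_nonzero_defect_numbers S \<longleftrightarrow>
     same_hilbert_dim (defect_space S \<i>) (defect_space S (- \<i>)) \<and> defect_space S \<i> \<noteq> {0}"

text \<open>The set \<open>\<D>(S) \<dotplus> \<frak>N\<^sub>\<lambda>\<close> (the sum is automatically direct for nonreal \<open>\<lambda>\<close>).\<close>
definition dom_plus_defect :: "'a::chilbert op \<Rightarrow> complex \<Rightarrow> 'a set" where
  "dom_plus_defect S l = {f + g | f g. f \<in> fst S \<and> g \<in> defect_space S l}"

text \<open>The boundary Hilbert space \<open>\<H>\<close> is
realised as a closed subspace \<open>Hb\<close> of the ambient space (every Hilbert space of dimension
at most that of the ambient space is isometric to such a subspace; the boundary space
of any triplet has the dimension of \<open>\<frak>N\<^sub>i\<close>).\<close>
definition boundary_triplet :: "'a::chilbert op \<Rightarrow> 'a set \<Rightarrow> ('a \<Rightarrow> 'a) \<Rightarrow> ('a \<Rightarrow> 'a) \<Rightarrow> bool" where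
  "boundary_triplet S Hb Gm Gp \<longleftrightarrow>
     csubspace Hb \<and> closed Hb \<and>
     (\<forall>f\<in>adj_dom S. Gm f \<in> Hb \<and> Gp f \<in> Hb) \<and>
     (\<forall>f\<in>adj_dom S. \<forall>g\<in>adj_dom S. Gm (f + g) = Gm f + Gm g \<and> Gp (f + g) = Gp f + Gp g) \<and>
     (\<forall>a. \<forall>f\<in>adj_dom S. Gm (scaleC a f) = scaleC a (Gm f) \<and> Gp (scaleC a f) = scaleC a (Gp f)) \<and>
     (\<forall>f\<in>adj_dom S. \<forall>g\<in>adj_dom S.
        cinner (adj_fun S f) g - cinner f (adj_fun S g)
          = \<i> * (cinner (Gp f) (Gp g) - cinner (Gm f) (Gm g))) \<and>
     (\<forall>h1\<in>Hb. \<forall>h2\<in>Hb. \<exists>f\<in>adj_dom S. Gm f = h1 \<and> Gp f = h2)"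

definition bounded_op_on :: "'a::chilbert set \<Rightarrow> ('a \<Rightarrow> 'a) \<Rightarrow> bool" where
  "bounded_op_on Hb \<Theta> \<longleftrightarrow> (\<forall>h\<in>Hb. \<Theta> h \<in> Hb) \<and>
     (\<forall>x\<in>Hb. \<forall>y\<in>Hb. \<Theta> (x + y) = \<Theta> x + \<Theta> y) \<and>
     (\<forall>a. \<forall>x\<in>Hb. \<Theta> (scaleC a x) = scaleC a (\<Theta> x)) \<and>
     (\<exists>K. \<forall>h\<in>Hb. norm (\<Theta> h) \<le> K * norm h)"

text \<open>\<open>\<Theta>\<close> is the value of the characteristic function at \<open>\<lambda>\<close> w.r.t. the triplet.\<close>
definition is_char_fun_value :: "'a::chilbert op \<Rightarrow> 'a set \<Rightarrow> ('a \<Rightarrow> 'a) \<Rightarrow> ('a \<Rightarrow> 'a)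
    \<Rightarrow> complex \<Rightarrow> ('a \<Rightarrow> 'a) \<Rightarrow> bool" where
  "is_char_fun_value S Hb Gm Gp l \<Theta> \<longleftrightarrow> bounded_op_on Hb \<Theta> \<and>
     dom_plus_defect S l = {f \<in> adj_dom S. \<Theta> (Gp f) = Gm f}"

definition phillips_symmetric :: "'a::chilbert op \<Rightarrow> bool" where
  "phillips_symmetric S \<longleftrightarrow> linear_op S \<and> closed_op S \<and> densely_defined S \<and> symmetric_op S \<and>
     equal_nonzero_defect_numbers S \<and>
     (\<exists>Hb Gm Gp. boundary_triplet S Hb Gm Gp \<and>
        (\<exists>\<Theta>. \<forall>l. Im l > 0 \<longrightarrow> is_char_fun_value S Hb Gm Gp l \<Theta>))"

end

theory Submission
  imports Defs
begin

lemma scaleC_zero_left[simp]: "scaleC 0 (x::'a::chilbert) = 0"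
  using scaleC_of_real[of 0 x] by simp

lemma scaleC_zero_right[simp]: "scaleC a (0::'a::chilbert) = 0"
  using scaleC_add_right[of a 0 0] by simp

lemma scaleC_minus_right: "scaleC a (- (x::'a::chilbert)) = - scaleC a x"
  using scaleC_add_right[of a x "-x"] by (simp add: eq_neg_iff_add_eq_0 add.commute)

lemma scaleC_diff_right: "scaleC a ((x::'a::chilbert) - y) = scaleC a x - scaleC a y"
  using scaleC_add_right[of a x "-y"] by (simp add: scaleC_minus_right)

lemma scaleC_minus_left: "scaleC (- a) (x::'a::chilbert) = - scaleC a x"
  using scaleC_add_left[of a "-a" x] by (simp add: eq_neg_iff_add_eq_0 add.commute)

lemma scaleC_diff_left: "scaleC (a - b) (x::'a::chilbert) = scaleC a x - scaleC b x"
  using scaleC_add_left[of a "-b" x] by (simp add: scaleC_minus_left)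

lemma scaleC_minus_one: "scaleC (-1) (x::'a::chilbert) = - x"
  by (simp add: scaleC_minus_left scaleC_one)

lemma scaleC_scaleR: "scaleC a (scaleR r (x::'a::chilbert)) = scaleR r (scaleC a x)"
  by (simp only: scaleC_of_real[symmetric] scaleC_mult[symmetric]) (simp only: mult.commute)

lemma scaleC_sum_right: "scaleC a (sum f A) = (\<Sum>x\<in>A. scaleC a (f x :: 'a::chilbert))"
  by (induction A rule: infinite_finite_induct) (auto simp: scaleC_add_right)

lemma cinner_add_right: "cinner (x::'a::chilbert) (y + z) = cinner x y + cinner x z"
proof -
  have "cinner x (y + z) = cnj (cinner (y + z) x)" by (rule cinner_commute)
  also have "\<dots> = cnj (cinner y x) + cnj (cinner z x)" by (simp add: cinner_add_left)
  also have "cnj (cinner y x) = cinner x y" using cinner_commute[of x y] by simp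
  also have "cnj (cinner z x) = cinner x z" using cinner_commute[of x z] by simp
  finally show ?thesis .
qed

lemma cinner_scaleC_right: "cinner (x::'a::chilbert) (scaleC a y) = cnj a * cinner x y"
proof -
  have "cinner x (scaleC a y) = cnj (cinner (scaleC a y) x)" by (rule cinner_commute)
  also have "\<dots> = cnj a * cnj (cinner y x)" by (simp add: cinner_scaleC_left)
  also have "cnj (cinner y x) = cinner x y" using cinner_commute[of x y] by simp
  finally show ?thesis .
qed

lemma cinner_zero_left[simp]: "cinner 0 (x::'a::chilbert) = 0"
  using cinner_add_left[of 0 0 x] by simp

lemma cinner_zero_right[simp]: "cinner (x::'a::chilbert) 0 = 0"
  using cinner_add_right[of x 0 0] by simp

lemma cinner_minus_left: "cinner (- x) (y::'a::chilbert) = - cinner x y"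
  using cinner_add_left[of x "-x" y] by (simp add: eq_neg_iff_add_eq_0 add.commute)

lemma cinner_minus_right: "cinner x (- (y::'a::chilbert)) = - cinner x y"
  using cinner_add_right[of x y "-y"] by (simp add: eq_neg_iff_add_eq_0 add.commute)

lemma cinner_diff_left: "cinner (x - z) (y::'a::chilbert) = cinner x y - cinner z y"
  using cinner_add_left[of x "-z" y] by (simp add: cinner_minus_left)

lemma cinner_diff_right: "cinner x (y - (z::'a::chilbert)) = cinner x y - cinner x z"
  using cinner_add_right[of x y "-z"] by (simp add: cinner_minus_right)

lemma cinner_sum_left: "cinner (sum f A) (y::'a::chilbert) = (\<Sum>x\<in>A. cinner (f x) y)"
  by (induction A rule: infinite_finite_induct) (auto simp: cinner_add_left)

lemma cinner_sum_right: "cinner y (sum f A) = (\<Sum>x\<in>A. cinner (y::'a::chilbert) (f x))"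
  by (induction A rule: infinite_finite_induct) (auto simp: cinner_add_right)

lemma cinner_self_Re: "Re (cinner x (x::'a::chilbert)) = (norm x)^2"
proof -
  have "Re (cinner x x) \<ge> 0"
    using norm_ge_zero[of x] by (simp only: norm_eq_sqrt_cinner[of x] real_sqrt_ge_0_iff)
  then show ?thesis using norm_eq_sqrt_cinner[of x] by simp
qed

lemma cinner_self: "cinner x (x::'a::chilbert) = complex_of_real ((norm x)^2)"
  by (simp add: complex_eq_iff cinner_self_Re cinner_self_real)

lemma cinner_self_eq_0: "cinner x (x::'a::chilbert) = 0 \<longleftrightarrow> x = 0"
  by (simp add: cinner_self)

lemma norm_scaleC: "norm (scaleC a (x::'a::chilbert)) = cmod a * norm x"
proof -
  have "cinner (scaleC a x) (scaleC a x) = (a * cnj a) * cinner x x"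
    by (simp add: cinner_scaleC_left cinner_scaleC_right)
  also have "\<dots> = complex_of_real ((cmod a)^2 * (norm x)^2)"
    by (simp only: complex_norm_square[symmetric] cinner_self of_real_mult)
  finally have "complex_of_real ((norm (scaleC a x))^2) = complex_of_real ((cmod a)^2 * (norm x)^2)"
    by (simp only: cinner_self)
  then have "(norm (scaleC a x))^2 = (cmod a * norm x)^2"
    by (simp only: of_real_eq_iff power_mult_distrib)
  then show ?thesis
    by (simp add: power2_eq_iff_nonneg)
qed

lemma cauchy_schwarz: "cmod (cinner x y) \<le> norm x * norm (y::'a::chilbert)"
proof (cases "y = 0")
  case True then show ?thesis by simp
next
  case False
  define c where "c = cinner x y"
  define n where "n = (norm y)^2"
  define t where "t = c / complex_of_real n"
  have ny: "n > 0" using False by (simp add: n_def)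
  have yy: "cinner y y = complex_of_real n" by (simp add: n_def cinner_self)
  have yx: "cinner y x = cnj c" by (simp add: c_def cinner_commute[of y x])
  have e1: "cinner (x - scaleC t y) (x - scaleC t y)
     = cinner x x - cnj t * c - t * cnj c + t * cnj t * complex_of_real n"
    unfolding cinner_diff_left cinner_diff_right cinner_scaleC_left cinner_scaleC_right
      yy yx c_def[symmetric] by (simp add: algebra_simps)
  have ct: "cnj t = cnj c / complex_of_real n" by (simp add: t_def)
  have mc: "c * cnj c = complex_of_real ((cmod c)^2)" by (rule complex_norm_square[symmetric])
  have e2: "cnj t * c = complex_of_real ((cmod c)^2 / n)"
  proof -
    have "cnj t * c = (c * cnj c) / complex_of_real n" by (simp add: ct)
    then show ?thesis by (simp only: mc of_real_divide)
  qed
  have e3: "t * cnj c = complex_of_real ((cmod c)^2 / n)"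
  proof -
    have "t * cnj c = (c * cnj c) / complex_of_real n" by (simp add: t_def)
    then show ?thesis by (simp only: mc of_real_divide)
  qed
  have e4: "t * cnj t * complex_of_real n = complex_of_real ((cmod c)^2 / n)"
  proof -
    have "t * cnj t * complex_of_real n = (c * cnj c) / complex_of_real n"
      using ny by (simp add: t_def ct power2_eq_square)
    then show ?thesis by (simp only: mc of_real_divide)
  qed
  have "0 \<le> Re (cinner (x - scaleC t y) (x - scaleC t y))"
    by (simp add: cinner_self_Re)
  also have "\<dots> = (norm x)^2 - (cmod c)^2 / n"
    unfolding e1 e2 e3 e4 by (simp add: cinner_self_Re)
  finally have "(cmod c)^2 \<le> (norm x)^2 * n"
    using ny by (simp add: field_simps)
  then have "(cmod c)^2 \<le> (norm x * norm y)^2"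
    by (simp add: n_def power_mult_distrib)
  then show ?thesis
    unfolding c_def by (rule power2_le_imp_le) simp
qed

lemma bounded_bilinear_cinner: "bounded_bilinear (cinner :: 'a::chilbert \<Rightarrow> 'a \<Rightarrow> complex)"
proof
  fix a a' b b' :: 'a and r :: real
  show "cinner (a + a') b = cinner a b + cinner a' b" by (rule cinner_add_left)
  show "cinner a (b + b') = cinner a b + cinner a b'" by (rule cinner_add_right)
  show "cinner (r *\<^sub>R a) b = r *\<^sub>R cinner a b"
    by (simp add: scaleC_of_real[symmetric] cinner_scaleC_left scaleR_conv_of_real)
  show "cinner a (r *\<^sub>R b) = r *\<^sub>R cinner a b"
    by (simp add: scaleC_of_real[symmetric] cinner_scaleC_right scaleR_conv_of_real)
  show "\<exists>K. \<forall>a b. norm (cinner a b) \<le> norm (a::'a) * norm (b::'a) * K"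
    by (rule exI[of _ 1]) (simp add: cauchy_schwarz)
qed

lemmas tendsto_cinner = bounded_bilinear.tendsto[OF bounded_bilinear_cinner]
lemmas continuous_on_cinner = bounded_bilinear.continuous_on[OF bounded_bilinear_cinner]

lemma bounded_linear_scaleC: "bounded_linear (scaleC a :: 'a::chilbert \<Rightarrow> 'a)"
proof
  fix x y :: 'a and r :: real
  show "scaleC a (x + y) = scaleC a x + scaleC a y" by (rule scaleC_add_right)
  show "scaleC a (r *\<^sub>R x) = r *\<^sub>R scaleC a x" by (rule scaleC_scaleR)
  show "\<exists>K. \<forall>x. norm (scaleC a (x::'a)) \<le> norm x * K"
    by (rule exI[of _ "cmod a"]) (simp add: norm_scaleC)
qed

lemmas tendsto_scaleC = bounded_linear.tendsto[OF bounded_linear_scaleC]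

lemma closed_orth: "closed {y::'a::chilbert. \<forall>x\<in>A. cinner x y = 0}"
proof -
  have "{y::'a. \<forall>x\<in>A. cinner x y = 0} = (\<Inter>x\<in>A. {y. cinner x y = 0})" by auto
  moreover have "closed {y. cinner x y = (0::complex)}" for x :: 'a
    by (rule closed_Collect_eq) (rule continuous_on_cinner continuous_on_const continuous_on_id)+
  ultimately show ?thesis by (simp add: closed_INT)
qed

lemma parallelogram: "(norm (x + y))^2 + (norm (x - (y::'a::chilbert)))^2 = 2 * (norm x)^2 + 2 * (norm y)^2"
proof -
  have "cinner (x+y) (x+y) + cinner (x-y) (x-y) = 2 * cinner x x + 2 * cinner y y"
    by (simp add: cinner_add_left cinner_add_right cinner_diff_left cinner_diff_right)
  then have "Re (cinner (x+y) (x+y) + cinner (x-y) (x-y)) = Re (2 * cinner x x + 2 * cinner y y)"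
    by (rule arg_cong)
  then have "Re (cinner (x+y) (x+y)) + Re (cinner (x-y) (x-y)) = 2 * Re (cinner x x) + 2 * Re (cinner y y)"
    by simp
  then show ?thesis by (simp only: cinner_self_Re)
qed

lemma csubspace_scaleR: "csubspace V \<Longrightarrow> x \<in> V \<Longrightarrow> scaleR r x \<in> V"
  unfolding csubspace_def by (simp flip: scaleC_of_real)
lemma csubspace_add: "csubspace V \<Longrightarrow> x \<in> V \<Longrightarrow> y \<in> V \<Longrightarrow> x + y \<in> V"
  by (simp add: csubspace_def)
lemma csubspace_scaleC: "csubspace V \<Longrightarrow> x \<in> V \<Longrightarrow> scaleC a x \<in> V"
  by (simp add: csubspace_def)
lemma csubspace_0: "csubspace V \<Longrightarrow> 0 \<in> V"
  by (simp add: csubspace_def)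
lemma csubspace_minus: "csubspace V \<Longrightarrow> x \<in> V \<Longrightarrow> - x \<in> V"
  using csubspace_scaleC[of V x "-1"] by (simp add: scaleC_minus_one)
lemma csubspace_diff: "csubspace V \<Longrightarrow> x \<in> V \<Longrightarrow> y \<in> V \<Longrightarrow> x - y \<in> V"
  using csubspace_add[of V x "-y"] csubspace_minus[of V y] by simp
lemma csubspace_sum: "csubspace V \<Longrightarrow> (\<And>x. x \<in> A \<Longrightarrow> f x \<in> V) \<Longrightarrow> sum f A \<in> V"
proof (induction A rule: infinite_finite_induct)
  case (insert x F)
  have "sum f F \<in> V" by (rule insert.IH) (use insert.prems in auto)
  moreover have "f x \<in> V" using insert.prems by simp
  ultimately show ?case using insert.hyps insert.prems(1) by (simp add: csubspace_add)
qed (auto simp: csubspace_0)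

lemma norm_diff_scaleC_sq:
  "(norm (z - scaleC t w))^2 = (norm z)^2 - 2 * Re (cnj t * cinner z (w::'a::chilbert)) + (cmod t)^2 * (norm w)^2"
proof -
  define c where "c = cinner z w"
  have wz: "cinner w z = cnj c" by (simp add: c_def cinner_commute[of w z])
  have e: "cinner (z - scaleC t w) (z - scaleC t w)
     = cinner z z - cnj t * c - t * cnj c + (t * cnj t) * cinner w w"
    unfolding cinner_diff_left cinner_diff_right cinner_scaleC_left cinner_scaleC_right
      wz c_def[symmetric] by (simp add: algebra_simps)
  have r1: "Re (t * cnj c) = Re (cnj t * c)"
  proof -
    have "t * cnj c = cnj (cnj t * c)" by simp
    then show ?thesis by simp
  qed
  have r2: "Re ((t * cnj t) * cinner w w) = (cmod t)^2 * (norm w)^2"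
    by (simp only: complex_norm_square[symmetric] cinner_self of_real_mult[symmetric] Re_complex_of_real)
  have "(norm (z - scaleC t w))^2 = Re (cinner (z - scaleC t w) (z - scaleC t w))"
    by (simp add: cinner_self_Re)
  also have "\<dots> = Re (cinner z z) - Re (cnj t * c) - Re (t * cnj c) + Re ((t * cnj t) * cinner w w)"
    unfolding e by simp
  also have "\<dots> = (norm z)^2 - 2 * Re (cnj t * c) + (cmod t)^2 * (norm w)^2"
    unfolding r1 r2 cinner_self_Re by simp
  finally show ?thesis by (simp add: c_def)
qed

lemma min_imp_orth:
  fixes M :: "'a::chilbert set"
  assumes sub: "csubspace M" and mM: "m \<in> M" and mn: "\<forall>w\<in>M. norm (y - m) \<le> norm (y - w)"
    and wM: "w \<in> M"
  shows "cinner (y - m) w = 0"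
proof (rule ccontr)
  define z where "z = y - m"
  define c where "c = cinner z w"
  assume "cinner (y - m) w \<noteq> 0"
  then have c0: "c \<noteq> 0" by (simp add: c_def z_def)
  define s where "s = 1 / ((norm w)^2 + 1)"
  have p: "(norm w)^2 + 1 > 0" by (smt (verit) zero_le_power2)
  have s0: "s > 0" using p by (simp add: s_def)
  have s1: "s * (norm w)^2 < 1" using p by (simp add: s_def field_simps)
  define t where "t = complex_of_real s * c"
  have "m + scaleC t w \<in> M" using sub mM wM by (simp add: csubspace_add csubspace_scaleC)
  then have le: "norm z \<le> norm (z - scaleC t w)"
    using mn unfolding z_def by (metis diff_diff_eq)
  have ret: "Re (cnj t * c) = s * (cmod c)^2"
    unfolding t_def by (simp only: complex_cnj_mult complex_cnj_complex_of_real mult.assoc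
        complex_norm_square[symmetric] mult.commute[of "cnj c"] of_real_mult[symmetric] Re_complex_of_real)
  have ct: "(cmod t)^2 = s^2 * (cmod c)^2"
    using s0 by (simp add: t_def norm_mult power_mult_distrib)
  have "(norm (z - scaleC t w))^2 = (norm z)^2 - s * (cmod c)^2 * (2 - s * (norm w)^2)"
    unfolding norm_diff_scaleC_sq c_def[symmetric] ret ct by (simp add: algebra_simps power2_eq_square)
  also have "\<dots> < (norm z)^2"
    using s0 s1 c0 by (simp add: mult_pos_pos)
  finally have "norm (z - scaleC t w) < norm z"
    by (rule power_less_imp_less_base) simp
  with le show False by simp
qed

lemma projection_min:
  fixes M :: "'a::chilbert set"
  assumes sub: "csubspace M" and cl: "closed M"
  shows "\<exists>m\<in>M. \<forall>w\<in>M. norm (y - m) \<le> norm (y - w)"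
proof -
  define d where "d = infdist y M"
  have ne: "M \<noteq> {}" using csubspace_0[OF sub] by auto
  have d0: "d \<ge> 0" by (simp add: d_def infdist_nonneg)
  have dle: "d \<le> norm (y - w)" if "w \<in> M" for w
    using infdist_le[OF that, of y] by (simp add: d_def dist_norm)
  define e where "e n = inverse (real (Suc n))" for n
  have e0: "e n > 0" for n by (simp add: e_def)
  have e1: "e n \<le> 1" for n by (simp add: e_def inverse_le_1_iff)
  have "\<exists>m. m \<in> M \<and> dist y m < d + e n" for n
  proof -
    have "(INF a\<in>M. dist y a) < d + e n" using e0[of n] ne by (simp add: d_def infdist_notempty)
    then show ?thesis
      using cINF_less_iff[OF ne, of "dist y" "d + e n"] by (auto intro: bdd_belowI[of _ 0])
  qed
  then obtain s where s: "\<And>n. s n \<in> M \<and> dist y (s n) < d + e n" by metis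
  have sq: "(norm (y - s n))^2 \<le> d^2 + (2*d+1) * e n" for n
  proof -
    have a: "norm (y - s n) < d + e n" using s[of n] by (simp add: dist_norm)
    have "(norm (y - s n))^2 \<le> (d + e n)^2"
      using a by (intro power_mono) auto
    also have "\<dots> = d^2 + 2*d*e n + e n * e n" by (simp add: power2_eq_square algebra_simps)
    also have "\<dots> \<le> d^2 + (2*d+1) * e n"
      using e1[of n] e0[of n] by (simp add: algebra_simps mult_left_le)
    finally show ?thesis .
  qed
  have key: "(norm (s n - s k))^2 \<le> 2 * (2*d+1) * (e n + e k)" for n k
  proof -
    define a where "a = y - s n"
    define b where "b = y - s k"
    define mid where "mid = scaleR (1/2) (s n + s k)"
    have midM: "mid \<in> M" using s sub by (simp add: mid_def csubspace_add csubspace_scaleR)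
    have ab: "a + b = scaleR 2 (y - mid)"
      by (simp add: a_def b_def mid_def algebra_simps scaleR_2)
    have "norm (a + b) = 2 * norm (y - mid)" by (simp add: ab)
    then have "norm (a + b) \<ge> 2 * d" using dle[OF midM] by simp
    then have nab: "(norm (a + b))^2 \<ge> 4 * d^2"
    proof -
      have "(2*d)^2 \<le> (norm (a+b))^2" using \<open>norm (a + b) \<ge> 2 * d\<close> d0 by (intro power_mono) auto
      then show ?thesis by (simp add: power_mult_distrib)
    qed
    have "a - b = s k - s n" by (simp add: a_def b_def)
    then have "norm (s n - s k) = norm (a - b)" by (simp add: norm_minus_commute)
    then have "(norm (s n - s k))^2 = 2 * (norm a)^2 + 2 * (norm b)^2 - (norm (a + b))^2"
      using parallelogram[of a b] by simp
    also have "\<dots> \<le> 2 * (d^2 + (2*d+1) * e n) + 2 * (d^2 + (2*d+1) * e k) - 4 * d^2"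
      using sq[of n] sq[of k] nab by (simp add: a_def b_def)
    finally show ?thesis by (simp add: algebra_simps)
  qed
  have "Cauchy s"
  proof (rule CauchyI)
    fix r :: real assume r: "r > 0"
    obtain N where N: "inverse (real (Suc N)) < r^2 / (4 * (2*d+1))"
      using reals_Archimedean[of "r^2 / (4 * (2*d+1))"] r d0 by (auto simp: field_simps)
    show "\<exists>N. \<forall>m\<ge>N. \<forall>n\<ge>N. norm (s m - s n) < r"
    proof (intro exI allI impI)
      fix m n assume mN: "m \<ge> N" and nN: "n \<ge> N"
      have em: "e m \<le> e N" and en: "e n \<le> e N" using mN nN
        by (auto simp: e_def intro!: le_imp_inverse_le)
      have "(norm (s m - s n))^2 \<le> 2 * (2*d+1) * (e m + e n)" by (rule key)
      also have "\<dots> \<le> 2 * (2*d+1) * (2 * e N)"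
        using em en d0 by (intro mult_left_mono) auto
      also have "\<dots> < r^2"
        using N d0 by (simp add: e_def field_simps)
      finally show "norm (s m - s n) < r"
        by (rule power_less_imp_less_base) (use r in simp)
    qed
  qed
  then obtain m where lim: "s \<longlonglongrightarrow> m"
    using Cauchy_convergent_iff convergent_def by blast
  have mM: "m \<in> M" using closed_sequentially[OF cl _ lim] s by blast
  have "norm (y - m) \<le> d"
  proof (rule LIMSEQ_le)
    show "(\<lambda>n. norm (y - s n)) \<longlonglongrightarrow> norm (y - m)" by (intro tendsto_intros lim)
    show "(\<lambda>n. d + e n) \<longlonglongrightarrow> d" unfolding e_def by (rule LIMSEQ_inverse_real_of_nat_add)
    show "\<exists>N. \<forall>n\<ge>N. norm (y - s n) \<le> d + e n"
      using s by (auto simp: dist_norm less_imp_le)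
  qed
  then show ?thesis using mM dle by (meson order.trans)
qed

lemma projection:
  fixes M :: "'a::chilbert set"
  assumes sub: "csubspace M" and cl: "closed M"
  shows "\<exists>m\<in>M. \<forall>w\<in>M. cinner (y - m) w = 0"
  using projection_min[OF assms, of y] min_imp_orth[OF sub] by blast

lemma iso_add:
  fixes U :: "'a::chilbert \<Rightarrow> 'a"
  assumes V: "csubspace V" and pres: "\<And>x y. x \<in> V \<Longrightarrow> y \<in> V \<Longrightarrow> cinner (U x) (U y) = cinner x y"
    and x: "x \<in> V" and y: "y \<in> V"
  shows "U (x + y) = U x + U y"
proof -
  have p: "x + y \<in> V" using V x y by (rule csubspace_add)
  have "cinner (U (x+y) - U x - U y) (U (x+y) - U x - U y) = cinner ((x+y) - x - y) ((x+y) - x - y)"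
    unfolding cinner_diff_left cinner_diff_right using p x y by (simp add: pres)
  also have "\<dots> = 0" by simp
  finally have "U (x+y) - U x - U y = 0" by (simp add: cinner_self_eq_0)
  then show ?thesis by (simp add: algebra_simps)
qed

lemma iso_scaleC:
  fixes U :: "'a::chilbert \<Rightarrow> 'a"
  assumes V: "csubspace V" and pres: "\<And>x y. x \<in> V \<Longrightarrow> y \<in> V \<Longrightarrow> cinner (U x) (U y) = cinner x y"
    and x: "x \<in> V"
  shows "U (scaleC a x) = scaleC a (U x)"
proof -
  have p: "scaleC a x \<in> V" using V x by (rule csubspace_scaleC)
  have "cinner (U (scaleC a x) - scaleC a (U x)) (U (scaleC a x) - scaleC a (U x))
      = cinner (scaleC a x - scaleC a x) (scaleC a x - scaleC a x)"
    unfolding cinner_diff_left cinner_diff_right cinner_scaleC_left cinner_scaleC_right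
    using p x by (simp add: pres cinner_scaleC_left cinner_scaleC_right algebra_simps)
  also have "\<dots> = 0" by simp
  finally show ?thesis by (simp add: cinner_self_eq_0)
qed

lemma iso_diff:
  fixes U :: "'a::chilbert \<Rightarrow> 'a"
  assumes V: "csubspace V" and pres: "\<And>x y. x \<in> V \<Longrightarrow> y \<in> V \<Longrightarrow> cinner (U x) (U y) = cinner x y"
    and x: "x \<in> V" and y: "y \<in> V"
  shows "U (x - y) = U x - U y"
proof -
  have "U (x - y) + U y = U x"
    using iso_add[OF V pres, of "x - y" y] csubspace_diff[OF V x y] y by simp
  then show ?thesis by (simp add: algebra_simps)
qed

lemma iso_norm:
  assumes "cinner (U x) (U x) = cinner x (x::'a::chilbert)"
  shows "norm (U x :: 'a) = norm x"
proof -
  have "(norm (U x))^2 = (norm x)^2"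
    using arg_cong[where f=Re, OF assms] by (simp only: cinner_self_Re)
  then show ?thesis by (simp add: power2_eq_iff_nonneg)
qed

lemma iso_sum:
  fixes U :: "'a::chilbert \<Rightarrow> 'a"
  assumes V: "csubspace V" and pres: "\<And>x y. x \<in> V \<Longrightarrow> y \<in> V \<Longrightarrow> cinner (U x) (U y) = cinner x y"
    and f: "\<And>i. i \<in> F \<Longrightarrow> f i \<in> V" and fin: "finite F"
  shows "U (\<Sum>i\<in>F. f i) = (\<Sum>i\<in>F. U (f i))"
  using fin f
proof (induction F rule: finite_induct)
  case empty
  have "U (0 + 0) = U 0 + U 0" using iso_add[OF V pres] csubspace_0[OF V] by blast
  then show ?case by simp
next
  case (insert i F)
  have s: "sum f F \<in> V" using insert by (intro csubspace_sum[OF V]) auto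
  show ?case using insert iso_add[OF V pres _ s, of "f i"] by simp
qed

definition orthon :: "'a::chilbert set \<Rightarrow> bool" where
  "orthon B \<longleftrightarrow> (\<forall>b\<in>B. cinner b b = 1) \<and> (\<forall>b\<in>B. \<forall>b'\<in>B. b \<noteq> b' \<longrightarrow> cinner b b' = 0)"

lemma orthon_inner: "orthon B \<Longrightarrow> b \<in> B \<Longrightarrow> b' \<in> B \<Longrightarrow> cinner b b' = (if b = b' then 1 else 0)"
  by (auto simp: orthon_def)

lemma sum_inner_gen:
  fixes h :: "'i \<Rightarrow> 'a::chilbert"
  assumes B: "orthon B" and fin: "finite F" and inj: "inj_on h F" and hF: "h ` F \<subseteq> B"
  shows "cinner (\<Sum>i\<in>F. scaleC (\<alpha> i) (h i)) (\<Sum>i\<in>F. scaleC (\<beta> i) (h i)) = (\<Sum>i\<in>F. \<alpha> i * cnj (\<beta> i))"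
proof -
  have "cinner (\<Sum>i\<in>F. scaleC (\<alpha> i) (h i)) (\<Sum>i\<in>F. scaleC (\<beta> i) (h i))
      = (\<Sum>j\<in>F. \<Sum>i\<in>F. cnj (\<beta> j) * (\<alpha> i * cinner (h i) (h j)))"
    unfolding cinner_sum_left cinner_scaleC_left cinner_sum_right cinner_scaleC_right sum_distrib_left ..
  also have "\<dots> = (\<Sum>j\<in>F. \<Sum>i\<in>F. if i = j then \<alpha> j * cnj (\<beta> j) else 0)"
  proof (intro sum.cong refl)
    fix i j assume j: "j \<in> F" and i: "i \<in> F"
    have "cinner (h i) (h j) = (if i = j then 1 else 0)"
    proof -
      have hi: "h i \<in> B" "h j \<in> B" using hF i j by auto
      then show ?thesis using orthon_inner[OF B hi] inj_onD[OF inj _ i j] by auto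
    qed
    then show "cnj (\<beta> j) * (\<alpha> i * cinner (h i) (h j)) = (if i = j then \<alpha> j * cnj (\<beta> j) else 0)"
      by auto
  qed
  also have "\<dots> = (\<Sum>i\<in>F. \<alpha> i * cnj (\<beta> i))" using fin by simp
  finally show ?thesis .
qed

lemma sum_coeff:
  assumes B: "orthon B" and fin: "finite F" and FB: "F \<subseteq> B" and b: "b \<in> B"
  shows "cinner (\<Sum>i\<in>F. scaleC (c i) i) b = (if b \<in> F then c b else 0)"
proof -
  have "cinner (\<Sum>i\<in>F. scaleC (c i) i) b = (\<Sum>i\<in>F. c i * cinner i b)"
    by (simp add: cinner_sum_left cinner_scaleC_left)
  also have "\<dots> = (\<Sum>i\<in>F. if i = b then c b else 0)"
    using FB b by (intro sum.cong refl) (auto simp: orthon_inner[OF B])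
  also have "\<dots> = (if b \<in> F then c b else 0)" using fin by simp
  finally show ?thesis .
qed

definition supp :: "'a::chilbert set \<Rightarrow> 'a \<Rightarrow> 'a set" where
  "supp B x = {b \<in> B. cinner x b \<noteq> 0}"

lemma cspan_rep:
  assumes B: "orthon B" and x: "x \<in> cspan B"
  shows "finite (supp B x)" "x = (\<Sum>b\<in>supp B x. scaleC (cinner x b) b)"
proof -
  obtain F c where F: "finite F" "F \<subseteq> B" and xe: "x = (\<Sum>b\<in>F. scaleC (c b) b)"
    using x by (auto simp: cspan_def)
  have co: "cinner x b = (if b \<in> F then c b else 0)" if "b \<in> B" for b
    unfolding xe using sum_coeff[OF B F that] .
  have sF: "supp B x \<subseteq> F" using co by (auto simp: supp_def split: if_splits)
  then show "finite (supp B x)" using F finite_subset by blast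
  have "x = (\<Sum>b\<in>F. scaleC (cinner x b) b)"
    unfolding xe[symmetric] using F co by (subst xe) (intro sum.cong refl, auto)
  also have "\<dots> = (\<Sum>b\<in>supp B x. scaleC (cinner x b) b)"
    using sF F by (intro sum.mono_neutral_right) (auto simp: supp_def)
  finally show "x = (\<Sum>b\<in>supp B x. scaleC (cinner x b) b)" .
qed

lemma cspan_rep_super:
  assumes B: "orthon B" and x: "x \<in> cspan B" and G: "finite G" "supp B x \<subseteq> G" "G \<subseteq> B"
  shows "x = (\<Sum>b\<in>G. scaleC (cinner x b) b)"
proof -
  have "x = (\<Sum>b\<in>supp B x. scaleC (cinner x b) b)" by (rule cspan_rep[OF B x])
  also have "\<dots> = (\<Sum>b\<in>G. scaleC (cinner x b) b)"
    using G by (intro sum.mono_neutral_left) (auto simp: supp_def)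
  finally show ?thesis .
qed

lemma cspan_I: "finite F \<Longrightarrow> F \<subseteq> B \<Longrightarrow> (\<Sum>b\<in>F. scaleC (c b) b) \<in> cspan B"
  by (auto simp: cspan_def)

lemma csubspace_cspan:
  assumes B: "orthon B"
  shows "csubspace (cspan B)"
  unfolding csubspace_def
proof (intro conjI ballI allI)
  show "0 \<in> cspan B" using cspan_I[of "{}" B] by simp
  fix x y assume x: "x \<in> cspan B" and y: "y \<in> cspan B"
  define G where "G = supp B x \<union> supp B y"
  have G: "finite G" "G \<subseteq> B" using cspan_rep[OF B x] cspan_rep[OF B y] by (auto simp: G_def supp_def)
  have "x + y = (\<Sum>b\<in>G. scaleC (cinner x b) b) + (\<Sum>b\<in>G. scaleC (cinner y b) b)"
    using cspan_rep_super[OF B x G(1) _ G(2)] cspan_rep_super[OF B y G(1) _ G(2)]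
    by (simp add: G_def)
  also have "\<dots> = (\<Sum>b\<in>G. scaleC (cinner x b + cinner y b) b)"
    by (simp add: sum.distrib scaleC_add_left)
  finally show "x + y \<in> cspan B" using cspan_I[OF G] by simp
next
  fix a x assume x: "x \<in> cspan B"
  have "scaleC a x = scaleC a (\<Sum>b\<in>supp B x. scaleC (cinner x b) b)"
    using cspan_rep(2)[OF B x] by simp
  also have "\<dots> = (\<Sum>b\<in>supp B x. scaleC (a * cinner x b) b)"
    by (simp add: scaleC_sum_right scaleC_mult)
  finally show "scaleC a x \<in> cspan B"
    using cspan_I[OF cspan_rep(1)[OF B x], of B] by (simp add: supp_def)
qed

lemma in_cspan: "b \<in> B \<Longrightarrow> b \<in> cspan B"
  using cspan_I[of "{b}" B "\<lambda>_. 1"] by (simp add: scaleC_one)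

lemma onb_orthon: "orthonormal_basis_of B V \<Longrightarrow> orthon B"
  by (simp add: orthonormal_basis_of_def orthon_def)

lemma unitary_exists:
  fixes V W :: "'a::chilbert set"
  assumes onb1: "orthonormal_basis_of B1 V" and onb2: "orthonormal_basis_of B2 W"
    and g: "bij_betw g B1 B2" and Vs: "csubspace V"
  shows "\<exists>U. (\<forall>x\<in>V. U x \<in> W) \<and> (\<forall>x\<in>V. \<forall>y\<in>V. cinner (U x) (U y) = cinner x y) \<and> W \<subseteq> U ` V"
proof -
  have O1: "orthon B1" using onb1 by (rule onb_orthon)
  have O2: "orthon B2" using onb2 by (rule onb_orthon)
  have Vcl: "V = closure (cspan B1)" and Wcl: "W = closure (cspan B2)"
    using onb1 onb2 by (auto simp: orthonormal_basis_of_def)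
  have B1V: "B1 \<subseteq> V" using onb1 by (auto simp: orthonormal_basis_of_def)
  have clV: "closed V" and clW: "closed W" using Vcl Wcl by auto
  have injg: "inj_on g B1" and gB: "g ` B1 = B2" using g by (auto simp: bij_betw_def)
  define S1 where "S1 = cspan B1"
  have S1s: "csubspace S1" unfolding S1_def by (rule csubspace_cspan[OF O1])
  have S1V: "S1 \<subseteq> V" using Vcl closure_subset S1_def by blast
  define U0 where "U0 x = (\<Sum>b\<in>supp B1 x. scaleC (cinner x b) (g b))" for x
  have U0_super: "U0 x = (\<Sum>b\<in>G. scaleC (cinner x b) (g b))"
    if "finite G" "supp B1 x \<subseteq> G" "G \<subseteq> B1" for x G
    unfolding U0_def using that by (intro sum.mono_neutral_left) (auto simp: supp_def)
  have pres0: "cinner (U0 x) (U0 y) = cinner x y" if x: "x \<in> S1" and y: "y \<in> S1" for x y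
  proof -
    define G where "G = supp B1 x \<union> supp B1 y"
    have G: "finite G" "G \<subseteq> B1"
      using cspan_rep(1)[OF O1] x y by (auto simp: G_def supp_def S1_def)
    have "cinner (U0 x) (U0 y) = cinner (\<Sum>b\<in>G. scaleC (cinner x b) (g b)) (\<Sum>b\<in>G. scaleC (cinner y b) (g b))"
      using U0_super[OF G(1) _ G(2), of x] U0_super[OF G(1) _ G(2), of y] by (simp add: G_def)
    also have "\<dots> = (\<Sum>b\<in>G. cinner x b * cnj (cinner y b))"
      using G gB by (intro sum_inner_gen[OF O2 G(1)] inj_on_subset[OF injg]) auto
    also have "\<dots> = cinner (\<Sum>b\<in>G. scaleC (cinner x b) b) (\<Sum>b\<in>G. scaleC (cinner y b) b)"
      using sum_inner_gen[OF O1 G(1), where h="\<lambda>b. b"] G by simp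
    also have "\<dots> = cinner x y"
      using cspan_rep_super[OF O1 _ G(1) _ G(2), of x] cspan_rep_super[OF O1 _ G(1) _ G(2), of y] x y
      by (simp add: G_def S1_def)
    finally show ?thesis .
  qed
  have U0W: "U0 x \<in> cspan B2" for x
    unfolding U0_def using csubspace_cspan[OF O2] gB
    by (intro csubspace_sum csubspace_scaleC in_cspan) (auto simp: supp_def)
  have U0b: "U0 b = g b" if b: "b \<in> B1" for b
  proof -
    have "supp B1 b \<subseteq> {b}" using O1 b by (auto simp: supp_def orthon_inner split: if_splits)
    then have "U0 b = scaleC (cinner b b) (g b)" using U0_super[of "{b}" b] b by simp
    then show ?thesis using O1 b by (simp add: orthon_def scaleC_one)
  qed
  have ndiff: "norm (U0 x - U0 y) = norm (x - y)" if "x \<in> S1" "y \<in> S1" for x y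
  proof -
    have "U0 x - U0 y = U0 (x - y)" using iso_diff[OF S1s pres0 that] by simp
    moreover have "norm (U0 (x - y)) = norm (x - y)"
      using pres0 csubspace_diff[OF S1s that] by (intro iso_norm) auto
    ultimately show ?thesis by simp
  qed
  have cauchy0: "Cauchy (\<lambda>n. U0 (t n))" if "\<forall>n. t n \<in> S1" "Cauchy t" for t
    using that unfolding Cauchy_iff by (simp add: ndiff)
  define sq where "sq x = (SOME s. (\<forall>n. s n \<in> S1) \<and> s \<longlonglongrightarrow> x)" for x
  have sq: "(\<forall>n. sq x n \<in> S1) \<and> sq x \<longlonglongrightarrow> x" if "x \<in> V" for x
  proof -
    have "\<exists>s. (\<forall>n. s n \<in> S1) \<and> s \<longlonglongrightarrow> x"
      using that Vcl closure_sequential[of x S1] by (simp add: S1_def)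
    then show ?thesis unfolding sq_def by (rule someI_ex)
  qed
  define U where "U x = lim (\<lambda>n. U0 (sq x n))" for x
  have conv: "(\<lambda>n. U0 (t n)) \<longlonglongrightarrow> U x" if x: "x \<in> V" and t: "\<forall>n. t n \<in> S1" "t \<longlonglongrightarrow> x" for x t
  proof -
    have s: "\<forall>n. sq x n \<in> S1" "sq x \<longlonglongrightarrow> x" using sq[OF x] by auto
    have "convergent (\<lambda>n. U0 (sq x n))"
      using cauchy0[OF s(1) LIMSEQ_imp_Cauchy[OF s(2)]] Cauchy_convergent_iff by blast
    then have ls: "(\<lambda>n. U0 (sq x n)) \<longlonglongrightarrow> U x" unfolding U_def convergent_LIMSEQ_iff .
    have "convergent (\<lambda>n. U0 (t n))"
      using cauchy0[OF t(1) LIMSEQ_imp_Cauchy[OF t(2)]] Cauchy_convergent_iff by blast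
    then obtain L where lt: "(\<lambda>n. U0 (t n)) \<longlonglongrightarrow> L" unfolding convergent_def by blast
    have "(\<lambda>n. norm (t n - sq x n)) \<longlonglongrightarrow> norm (x - x)"
      by (intro tendsto_intros t s)
    then have "(\<lambda>n. norm (U0 (t n) - U0 (sq x n))) \<longlonglongrightarrow> 0"
      using t s by (simp add: ndiff)
    then have "(\<lambda>n. U0 (t n) - U0 (sq x n)) \<longlonglongrightarrow> 0"
      by (simp add: tendsto_norm_zero_iff)
    moreover have "(\<lambda>n. U0 (t n) - U0 (sq x n)) \<longlonglongrightarrow> L - U x"
      by (intro tendsto_intros lt ls)
    ultimately have "L - U x = 0" using LIMSEQ_unique by blast
    then show ?thesis using lt by simp
  qed
  have UW: "U x \<in> W" if x: "x \<in> V" for x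
  proof -
    have s: "\<forall>n. sq x n \<in> S1" "sq x \<longlonglongrightarrow> x" using sq[OF x] by auto
    have "\<forall>n. U0 (sq x n) \<in> W" using U0W Wcl closure_subset by blast
    then show ?thesis using closed_sequentially[OF clW _ conv[OF x s]] by blast
  qed
  have pres: "cinner (U x) (U y) = cinner x y" if x: "x \<in> V" and y: "y \<in> V" for x y
  proof -
    have s: "\<forall>n. sq x n \<in> S1" "sq x \<longlonglongrightarrow> x" using sq[OF x] by auto
    have r: "\<forall>n. sq y n \<in> S1" "sq y \<longlonglongrightarrow> y" using sq[OF y] by auto
    have t1: "(\<lambda>n. cinner (U0 (sq x n)) (U0 (sq y n))) \<longlonglongrightarrow> cinner (U x) (U y)"
      by (intro tendsto_cinner conv[OF x s] conv[OF y r])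
    have eq: "(\<lambda>n. cinner (U0 (sq x n)) (U0 (sq y n))) = (\<lambda>n. cinner (sq x n) (sq y n))"
      using s r by (simp add: pres0)
    have "(\<lambda>n. cinner (sq x n) (sq y n)) \<longlonglongrightarrow> cinner x y"
      by (intro tendsto_cinner s r)
    then have t2: "(\<lambda>n. cinner (U0 (sq x n)) (U0 (sq y n))) \<longlonglongrightarrow> cinner x y"
      by (simp only: eq)
    show ?thesis by (rule LIMSEQ_unique[OF t1 t2])
  qed
  have Ub: "U b = g b" if b: "b \<in> B1" for b
  proof -
    have "b \<in> S1" using b in_cspan S1_def by blast
    then have "(\<lambda>n. U0 b) \<longlonglongrightarrow> U b" using conv[of b "\<lambda>n. b"] B1V b by auto
    then have "(\<lambda>n. g b) \<longlonglongrightarrow> U b" by (simp only: U0b[OF b])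
    then show ?thesis using LIMSEQ_unique[OF _ tendsto_const] by blast
  qed
  have Unorm: "norm (U x - U y) = norm (x - y)" if "x \<in> V" "y \<in> V" for x y
  proof -
    have "U x - U y = U (x - y)" using iso_diff[OF Vs pres that] by simp
    moreover have "norm (U (x - y)) = norm (x - y)"
      using pres csubspace_diff[OF Vs that] by (intro iso_norm) auto
    ultimately show ?thesis by simp
  qed
  have clU: "closed (U ` V)"
    unfolding closed_sequential_limits
  proof (intro allI impI)
    fix z l assume zl: "(\<forall>n. z n \<in> U ` V) \<and> z \<longlonglongrightarrow> l"
    have "\<exists>x. \<forall>n. x n \<in> V \<and> z n = U (x n)"
      by (rule choice) (use zl in blast)
    then obtain x where x: "\<And>n. x n \<in> V \<and> z n = U (x n)" by blast
    have "Cauchy z" using zl LIMSEQ_imp_Cauchy by blast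
    then have "Cauchy x" using x unfolding Cauchy_iff by (simp add: Unorm)
    then obtain y where xy: "x \<longlonglongrightarrow> y" using Cauchy_convergent_iff convergent_def by blast
    have yV: "y \<in> V" using closed_sequentially[OF clV _ xy] x by blast
    have "(\<lambda>n. norm (x n - y)) \<longlonglongrightarrow> norm (y - y)" by (intro tendsto_intros xy)
    then have "(\<lambda>n. norm (U (x n) - U y)) \<longlonglongrightarrow> 0" using x yV by (simp add: Unorm)
    then have "(\<lambda>n. U (x n) - U y) \<longlonglongrightarrow> 0" by (simp add: tendsto_norm_zero_iff)
    then have "(\<lambda>n. U (x n) - U y + U y) \<longlonglongrightarrow> 0 + U y" by (intro tendsto_intros)
    moreover have "z = (\<lambda>n. U (x n))" using x by auto
    ultimately have "z \<longlonglongrightarrow> U y" by simp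
    then have "l = U y" using zl LIMSEQ_unique by blast
    then show "l \<in> U ` V" using yV by blast
  qed
  have spanU: "cspan B2 \<subseteq> U ` V"
  proof
    fix z assume "z \<in> cspan B2"
    then obtain F' c where F': "finite F'" "F' \<subseteq> B2" and z: "z = (\<Sum>b\<in>F'. scaleC (c b) b)"
      by (auto simp: cspan_def)
    define F where "F = inv_into B1 g ` F'"
    have FB: "F \<subseteq> B1" using F' gB by (auto simp: F_def inv_into_into)
    have "g ` F = (\<lambda>x. x) ` F'" unfolding F_def image_image
      using F' gB by (intro image_cong refl) (auto simp: f_inv_into_f)
    then have gF: "g ` F = F'" by simp
    have bij: "bij_betw g F F'" by (rule bij_betw_subset[OF g FB gF])
    have finF: "finite F" using F' by (simp add: F_def)
    have "z = (\<Sum>b\<in>F. scaleC (c (g b)) (g b))" unfolding z using sum.reindex_bij_betw[OF bij, of "\<lambda>b. scaleC (c b) b"] by simp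
    also have "\<dots> = (\<Sum>b\<in>F. U (scaleC (c (g b)) b))"
    proof (intro sum.cong refl)
      fix b assume "b \<in> F"
      then have b: "b \<in> B1" "b \<in> V" using FB B1V by auto
      show "scaleC (c (g b)) (g b) = U (scaleC (c (g b)) b)"
        using iso_scaleC[OF Vs pres b(2)] Ub[OF b(1)] by simp
    qed
    also have "\<dots> = U (\<Sum>b\<in>F. scaleC (c (g b)) b)"
      using FB B1V finF by (intro iso_sum[OF Vs pres, symmetric] csubspace_scaleC[OF Vs]) auto
    finally have "z = U (\<Sum>b\<in>F. scaleC (c (g b)) b)" .
    moreover have "(\<Sum>b\<in>F. scaleC (c (g b)) b) \<in> V"
      using FB B1V by (intro csubspace_sum[OF Vs] csubspace_scaleC[OF Vs]) auto
    ultimately show "z \<in> U ` V" by blast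
  qed
  have "W \<subseteq> U ` V" using closure_mono[OF spanU] closure_closed[OF clU] Wcl by simp
  then show ?thesis using UW pres by blast
qed

lemma csubspace_orth: "csubspace {y::'a::chilbert. \<forall>x\<in>X. cinner x y = 0}"
  unfolding csubspace_def by (simp add: cinner_add_right cinner_scaleC_right)

locale sop =
  fixes S :: "'a::chilbert op"
  assumes lin: "linear_op S" and clo: "closed_op S" and dense: "densely_defined S"
    and sym: "symmetric_op S"
begin

abbreviation "D \<equiv> fst S"
abbreviation "A \<equiv> snd S"
abbreviation "Dst \<equiv> adj_dom S"
abbreviation "T \<equiv> adj_fun S"

lemma Dsub: "csubspace D" using lin by (simp add: linear_op_def)
lemma A_add: "x \<in> D \<Longrightarrow> y \<in> D \<Longrightarrow> A (x + y) = A x + A y" using lin by (simp add: linear_op_def)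
lemma A_scaleC: "x \<in> D \<Longrightarrow> A (scaleC a x) = scaleC a (A x)" using lin by (simp add: linear_op_def)
lemma A_diff: "x \<in> D \<Longrightarrow> y \<in> D \<Longrightarrow> A (x - y) = A x - A y"
proof -
  assume x: "x \<in> D" and y: "y \<in> D"
  have "A (x - y) + A y = A x" using A_add[OF csubspace_diff[OF Dsub x y] y] by simp
  then show ?thesis by (simp add: algebra_simps)
qed
lemma A_sym: "x \<in> D \<Longrightarrow> y \<in> D \<Longrightarrow> cinner (A x) y = cinner x (A y)"
  using sym by (simp add: symmetric_op_def)

lemma orth_dense_zero:
  assumes "\<forall>f\<in>D. cinner f w = 0"
  shows "w = 0"
proof -
  have cl: "closed {f. cinner f w = 0}"
    by (rule closed_Collect_eq) (rule continuous_on_cinner continuous_on_const continuous_on_id)+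
  have "D \<subseteq> {f. cinner f w = 0}" using assms by auto
  then have "closure D \<subseteq> {f. cinner f w = 0}" using closure_minimal[OF _ cl] by blast
  then have "cinner w w = 0" using dense by (auto simp: densely_defined_def)
  then show ?thesis by (simp add: cinner_self_eq_0)
qed

lemma adj_unique:
  assumes "\<forall>f\<in>D. cinner f h1 = cinner f h2"
  shows "h1 = h2"
proof -
  have h: "\<forall>f\<in>D. cinner f (h1 - h2) = 0" using assms by (simp add: cinner_diff_right)
  show ?thesis using orth_dense_zero[OF h] by simp
qed

lemma adj_char:
  assumes "\<forall>f\<in>D. cinner (A f) g = cinner f h"
  shows "g \<in> Dst" "T g = h"
proof -
  show "g \<in> Dst" using assms by (auto simp: adj_dom_def)
  show "T g = h" unfolding adj_fun_def
  proof (rule the_equality)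
    show "\<forall>f\<in>D. cinner (A f) g = cinner f h" by (rule assms)
    fix h' assume "\<forall>f\<in>D. cinner (A f) g = cinner f h'"
    then show "h' = h" using assms by (intro adj_unique) auto
  qed
qed

lemma adj_prop:
  assumes "g \<in> Dst" "f \<in> D"
  shows "cinner (A f) g = cinner f (T g)"
proof -
  obtain h where h: "\<forall>f\<in>D. cinner (A f) g = cinner f h" using assms(1) by (auto simp: adj_dom_def)
  then show ?thesis using adj_char(2)[OF h] assms(2) by simp
qed

lemma adj_prop': "g \<in> Dst \<Longrightarrow> f \<in> D \<Longrightarrow> cinner g (A f) = cinner (T g) f"
proof -
  assume a: "g \<in> Dst" "f \<in> D"
  have "cinner g (A f) = cnj (cinner (A f) g)" by (rule cinner_commute)
  also have "\<dots> = cnj (cinner f (T g))" using adj_prop[OF a] by simp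
  also have "\<dots> = cinner (T g) f" using cinner_commute[of "T g" f] by simp
  finally show ?thesis .
qed

lemma Dst_add: assumes "x \<in> Dst" "y \<in> Dst" shows "x + y \<in> Dst" "T (x + y) = T x + T y"
proof -
  have "\<forall>f\<in>D. cinner (A f) (x + y) = cinner f (T x + T y)"
    using assms by (simp add: cinner_add_right adj_prop)
  then show "x + y \<in> Dst" "T (x + y) = T x + T y" using adj_char by auto
qed

lemma Dst_scaleC: assumes "x \<in> Dst" shows "scaleC a x \<in> Dst" "T (scaleC a x) = scaleC a (T x)"
proof -
  have "\<forall>f\<in>D. cinner (A f) (scaleC a x) = cinner f (scaleC a (T x))"
    using assms by (simp add: cinner_scaleC_right adj_prop)
  then show "scaleC a x \<in> Dst" "T (scaleC a x) = scaleC a (T x)" using adj_char by auto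
qed

lemma Dst_0: "0 \<in> Dst" "T 0 = 0"
proof -
  have h: "\<forall>f\<in>D. cinner (A f) 0 = cinner f 0" by simp
  show "0 \<in> Dst" "T 0 = 0" using adj_char[OF h] by auto
qed

lemma Dst_sub: "csubspace Dst"
  unfolding csubspace_def using Dst_0 Dst_add Dst_scaleC by blast

lemma Dst_diff: assumes "x \<in> Dst" "y \<in> Dst" shows "x - y \<in> Dst" "T (x - y) = T x - T y"
proof -
  have m: "scaleC (-1) y \<in> Dst" "T (scaleC (-1) y) = - T y"
    using Dst_scaleC[OF assms(2), of "-1"] by (auto simp: scaleC_minus_one)
  show "x - y \<in> Dst" "T (x - y) = T x - T y"
    using Dst_add[OF assms(1) m(1)] m(2) by (auto simp: scaleC_minus_one)
qed

lemma D_Dst: assumes "x \<in> D" shows "x \<in> Dst" "T x = A x"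
proof -
  have "\<forall>f\<in>D. cinner (A f) x = cinner f (A x)" using assms A_sym by auto
  then show "x \<in> Dst" "T x = A x" using adj_char by auto
qed

lemma defect_char: "g \<in> defect_space S l \<longleftrightarrow> (\<forall>f\<in>D. cinner (A f - scaleC (cnj l) f) g = 0)"
proof
  assume g: "g \<in> defect_space S l"
  then have "g \<in> Dst" "T g = scaleC l g" by (auto simp: defect_space_def)
  then show "\<forall>f\<in>D. cinner (A f - scaleC (cnj l) f) g = 0"
    by (simp add: cinner_diff_left adj_prop cinner_scaleC_left cinner_scaleC_right)
next
  assume h: "\<forall>f\<in>D. cinner (A f - scaleC (cnj l) f) g = 0"
  then have "\<forall>f\<in>D. cinner (A f) g = cinner f (scaleC l g)"
    by (simp add: cinner_diff_left cinner_scaleC_left cinner_scaleC_right)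
  then show "g \<in> defect_space S l" using adj_char by (auto simp: defect_space_def)
qed

lemma defect_eq: "defect_space S l = {g. \<forall>x\<in>(\<lambda>f. A f - scaleC (cnj l) f) ` D. cinner x g = 0}"
  by (auto simp: defect_char)

lemma defect_sub: "csubspace (defect_space S l)"
  unfolding defect_eq by (rule csubspace_orth)

lemma defect_closed: "closed (defect_space S l)"
  unfolding defect_eq by (rule closed_orth)

lemma defect_Dst: "g \<in> defect_space S l \<Longrightarrow> g \<in> Dst" "g \<in> defect_space S l \<Longrightarrow> T g = scaleC l g"
  by (auto simp: defect_space_def)

end

lemma Cauchy_dom:
  fixes x :: "nat \<Rightarrow> 'a::real_normed_vector" and y :: "nat \<Rightarrow> 'b::real_normed_vector"
  assumes "Cauchy y" "\<And>m n. norm (x m - x n) \<le> norm (y m - y n)"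
  shows "Cauchy x"
  using assms unfolding Cauchy_iff by (meson le_less_trans)

context sop begin

definition "Ran = (\<lambda>f. A f + scaleC \<i> f) ` D"

abbreviation "Ni \<equiv> defect_space S \<i>"
abbreviation "Nm \<equiv> defect_space S (- \<i>)"

lemma A_zero: "A 0 = 0"
  using A_add[OF csubspace_0[OF Dsub] csubspace_0[OF Dsub]] by simp

lemma norm_plus_i:
  assumes x: "x \<in> D"
  shows "(norm (A x + scaleC \<i> x))^2 = (norm (A x))^2 + (norm x)^2"
proof -
  have "cinner (A x + scaleC \<i> x) (A x + scaleC \<i> x) = cinner (A x) (A x) + cinner x x"
    by (simp add: cinner_add_left cinner_add_right cinner_scaleC_left cinner_scaleC_right A_sym[OF x x] algebra_simps)
  then have "Re (cinner (A x + scaleC \<i> x) (A x + scaleC \<i> x)) = Re (cinner (A x) (A x)) + Re (cinner x x)"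
    by simp
  then show ?thesis by (simp only: cinner_self_Re)
qed

lemma Ran_sub: "csubspace Ran"
  unfolding csubspace_def Ran_def
proof (intro conjI ballI allI)
  show "0 \<in> (\<lambda>f. A f + scaleC \<i> f) ` D"
    using csubspace_0[OF Dsub] A_zero by (auto intro!: image_eqI[of _ _ 0])
next
  fix u v assume "u \<in> (\<lambda>f. A f + scaleC \<i> f) ` D" "v \<in> (\<lambda>f. A f + scaleC \<i> f) ` D"
  then obtain x y where x: "x \<in> D" "u = A x + scaleC \<i> x" and y: "y \<in> D" "v = A y + scaleC \<i> y" by auto
  have "u + v = A (x + y) + scaleC \<i> (x + y)"
    using x y by (simp add: A_add scaleC_add_right algebra_simps)
  then show "u + v \<in> (\<lambda>f. A f + scaleC \<i> f) ` D" using csubspace_add[OF Dsub x(1) y(1)] by blast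
next
  fix a u assume "u \<in> (\<lambda>f. A f + scaleC \<i> f) ` D"
  then obtain x where x: "x \<in> D" "u = A x + scaleC \<i> x" by auto
  have "scaleC a u = A (scaleC a x) + scaleC \<i> (scaleC a x)"
    using x by (simp add: A_scaleC scaleC_add_right scaleC_mult[symmetric] mult.commute)
  then show "scaleC a u \<in> (\<lambda>f. A f + scaleC \<i> f) ` D" using csubspace_scaleC[OF Dsub x(1)] by blast
qed

lemma Ran_closed: "closed Ran"
  unfolding closed_sequential_limits
proof (intro allI impI)
  fix y l assume yl: "(\<forall>n. y n \<in> Ran) \<and> y \<longlonglongrightarrow> l"
  have "\<exists>x. \<forall>n. x n \<in> D \<and> y n = A (x n) + scaleC \<i> (x n)"
    by (rule choice) (use yl in \<open>auto simp: Ran_def\<close>)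
  then obtain x where x: "\<And>n. x n \<in> D \<and> y n = A (x n) + scaleC \<i> (x n)" by blast
  have yd: "y m - y n = A (x m - x n) + scaleC \<i> (x m - x n)" for m n
    using x[of m] x[of n] by (simp add: A_diff scaleC_diff_right algebra_simps)
  have xmn: "x m - x n \<in> D" for m n using x csubspace_diff[OF Dsub] by blast
  have b1: "norm (x m - x n) \<le> norm (y m - y n)" for m n
  proof -
    have "(norm (x m - x n))^2 \<le> (norm (y m - y n))^2"
      unfolding yd norm_plus_i[OF xmn] by simp
    then show ?thesis by (simp add: abs_le_square_iff power2_le_iff_abs_le)
  qed
  have b2: "norm (A (x m) - A (x n)) \<le> norm (y m - y n)" for m n
  proof -
    have "(norm (A (x m - x n)))^2 \<le> (norm (y m - y n))^2"
      unfolding yd norm_plus_i[OF xmn] by simp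
    then have "(norm (A (x m) - A (x n)))^2 \<le> (norm (y m - y n))^2"
      using x[of m] x[of n] by (simp add: A_diff)
    then show ?thesis by (simp add: abs_le_square_iff power2_le_iff_abs_le)
  qed
  have cy: "Cauchy y" using yl LIMSEQ_imp_Cauchy by blast
  obtain x0 where x0: "x \<longlonglongrightarrow> x0"
    using Cauchy_dom[OF cy b1] Cauchy_convergent_iff convergent_def by blast
  obtain h where h: "(\<lambda>n. A (x n)) \<longlonglongrightarrow> h"
    using Cauchy_dom[OF cy b2] Cauchy_convergent_iff convergent_def by blast
  have lim: "(\<lambda>n. (x n, A (x n))) \<longlonglongrightarrow> (x0, h)" by (rule tendsto_Pair[OF x0 h])
  have mem: "(x n, A (x n)) \<in> {(f, A f) | f. f \<in> D}" for n
  proof -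
    have "x n \<in> D" using x by blast
    then show ?thesis by blast
  qed
  have G: "closed {(f, A f) | f. f \<in> D}" using clo by (simp add: closed_op_def)
  have "(x0, h) \<in> {(f, A f) | f. f \<in> D}" by (rule closed_sequentially[OF G mem lim])
  then have x0D: "x0 \<in> D" and hx: "h = A x0" by auto
  have "(\<lambda>n. A (x n) + scaleC \<i> (x n)) \<longlonglongrightarrow> h + scaleC \<i> x0"
    by (intro tendsto_add h tendsto_scaleC x0)
  moreover have "(\<lambda>n. A (x n) + scaleC \<i> (x n)) = y" using x by auto
  ultimately have "y \<longlonglongrightarrow> A x0 + scaleC \<i> x0" using hx by simp
  then have "l = A x0 + scaleC \<i> x0" using yl LIMSEQ_unique by blast
  then show "l \<in> Ran" using x0D by (auto simp: Ran_def)
qed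

lemma Ni_orth: "g \<in> Ni \<longleftrightarrow> (\<forall>w\<in>Ran. cinner w g = 0)"
  unfolding defect_char Ran_def by (simp add: scaleC_minus_left)

end

context sop begin

lemma VN:
  assumes f: "f \<in> Dst"
  shows "\<exists>f0 fi fm. f0 \<in> D \<and> fi \<in> Ni \<and> fm \<in> Nm \<and> f = f0 + fi + fm"
proof -
  define y where "y = T f + scaleC \<i> f"
  obtain m where mR: "m \<in> Ran" and orth: "\<forall>w\<in>Ran. cinner (y - m) w = 0"
    using projection[OF Ran_sub Ran_closed, of y] by blast
  obtain f0 where f0: "f0 \<in> D" and m: "m = A f0 + scaleC \<i> f0" using mR by (auto simp: Ran_def)
  define h where "h = y - m"
  have hN: "h \<in> Ni" unfolding Ni_orth
  proof
    fix w assume "w \<in> Ran"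
    then have "cinner h w = 0" using orth by (simp add: h_def)
    then show "cinner w h = 0" using cinner_commute[of w h] by simp
  qed
  define fi where "fi = scaleC (- \<i> / 2) h"
  have fiN: "fi \<in> Ni" unfolding fi_def by (rule csubspace_scaleC[OF defect_sub hN])
  have Tfi: "T fi = scaleC \<i> fi" by (rule defect_Dst(2)[OF fiN])
  have fih: "T fi + scaleC \<i> fi = h"
  proof -
    have "T fi + scaleC \<i> fi = scaleC (\<i> + \<i>) fi" unfolding Tfi scaleC_add_left by (rule refl)
    also have "\<dots> = scaleC ((\<i> + \<i>) * (- \<i> / 2)) h" unfolding fi_def scaleC_mult[symmetric] by (rule refl)
    also have "(\<i> + \<i>) * (- \<i> / 2) = 1" by (simp add: field_simps)
    finally show ?thesis by (simp add: scaleC_one)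
  qed
  define fm where "fm = f - f0 - fi"
  have f0s: "f0 \<in> Dst" "T f0 = A f0" using D_Dst[OF f0] by auto
  have fis: "fi \<in> Dst" using defect_Dst(1)[OF fiN] .
  have fmD: "fm \<in> Dst" unfolding fm_def using Dst_diff f f0s fis by metis
  have a1: "f - f0 \<in> Dst" "T (f - f0) = T f - A f0" using Dst_diff[OF f f0s(1)] f0s(2) by auto
  have Tfm: "T fm = T f - A f0 - T fi" unfolding fm_def
    using Dst_diff(2)[OF a1(1) fis] a1(2) by (simp only:)
  have "T fm + scaleC \<i> fm = (T f + scaleC \<i> f) - (A f0 + scaleC \<i> f0) - (T fi + scaleC \<i> fi)"
    unfolding Tfm unfolding fm_def scaleC_diff_right by (simp add: algebra_simps)
  also have "\<dots> = 0" unfolding fih h_def y_def[symmetric] m[symmetric] by simp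
  finally have "T fm = scaleC (- \<i>) fm" by (simp add: scaleC_minus_left eq_neg_iff_add_eq_0)
  then have fmN: "fm \<in> Nm" using fmD by (simp add: defect_space_def)
  have "f = f0 + fi + fm" by (simp add: fm_def)
  then show ?thesis using f0 fiN fmN by blast
qed

lemma VN_unique:
  assumes f0: "f0 \<in> D" and fi: "fi \<in> Ni" and fm: "fm \<in> Nm" and z: "f0 + fi + fm = 0"
  shows "f0 = 0" "fi = 0" "fm = 0"
proof -
  have f0s: "f0 \<in> Dst" "T f0 = A f0" using D_Dst[OF f0] by auto
  have fis: "fi \<in> Dst" "T fi = scaleC \<i> fi" using defect_Dst[OF fi] by auto
  have fms: "fm \<in> Dst" "T fm = scaleC (- \<i>) fm" using defect_Dst[OF fm] by auto
  have "T (f0 + fi + fm) = A f0 + scaleC \<i> fi + scaleC (- \<i>) fm"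
    using Dst_add[OF Dst_add(1)[OF f0s(1) fis(1)] fms(1)] Dst_add(2)[OF f0s(1) fis(1)] f0s(2) fis(2) fms(2)
    by simp
  then have e1: "A f0 + scaleC \<i> fi + scaleC (- \<i>) fm = 0" using z Dst_0 by simp
  have fmv: "fm = - (f0 + fi)"
  proof -
    have "fm = (f0 + fi + fm) - (f0 + fi)" by (simp add: algebra_simps)
    then show ?thesis using z by simp
  qed
  have "scaleC (- \<i>) fm = scaleC \<i> f0 + scaleC \<i> fi"
    unfolding fmv scaleC_minus_left scaleC_minus_right scaleC_add_right by simp
  then have e2: "(A f0 + scaleC \<i> f0) + (scaleC \<i> fi + scaleC \<i> fi) = 0"
    using e1 by (simp add: algebra_simps)
  define w where "w = A f0 + scaleC \<i> f0"
  have wR: "w \<in> Ran" using f0 by (auto simp: Ran_def w_def)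
  have c0: "cinner w fi = 0" using fi wR by (simp add: Ni_orth)
  have "cinner (w + (scaleC \<i> fi + scaleC \<i> fi)) fi = 0" using e2 by (simp add: w_def)
  then have "cinner w fi + (\<i> * cinner fi fi + \<i> * cinner fi fi) = 0"
    by (simp only: cinner_add_left cinner_scaleC_left)
  then have "(\<i> + \<i>) * cinner fi fi = 0"
    using c0 by (simp add: algebra_simps)
  then have "cinner fi fi = 0" by simp
  then show fi0: "fi = 0" by (simp add: cinner_self_eq_0)
  then have "A f0 + scaleC \<i> f0 = 0" using e2 by simp
  then have "(norm (A f0))^2 + (norm f0)^2 = 0" using norm_plus_i[OF f0] by simp
  then show f00: "f0 = 0" by (smt (verit) norm_eq_zero zero_le_power2 power_eq_0_iff)
  show "fm = 0" using fmv fi0 f00 by simp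
qed

lemma VN_unique2:
  assumes "f0 \<in> D" "fi \<in> Ni" "fm \<in> Nm" "g0 \<in> D" "gi \<in> Ni" "gm \<in> Nm"
    and eq: "f0 + fi + fm = g0 + gi + gm"
  shows "f0 = g0" "fi = gi" "fm = gm"
proof -
  have z: "(f0 - g0) + (fi - gi) + (fm - gm) = 0" using eq by (simp add: algebra_simps)
  have m: "f0 - g0 \<in> D" "fi - gi \<in> Ni" "fm - gm \<in> Nm"
    using assms csubspace_diff[OF Dsub] csubspace_diff[OF defect_sub] by auto
  show "f0 = g0" "fi = gi" "fm = gm" using VN_unique[OF m z] by auto
qed

definition "dec f = (SOME p. fst p \<in> D \<and> fst (snd p) \<in> Ni \<and> snd (snd p) \<in> Nm \<and> f = fst p + fst (snd p) + snd (snd p))"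
definition "cD f = fst (dec f)"
definition "cI f = fst (snd (dec f))"
definition "cM f = snd (snd (dec f))"

lemma dec:
  assumes f: "f \<in> Dst"
  shows "cD f \<in> D" "cI f \<in> Ni" "cM f \<in> Nm" "f = cD f + cI f + cM f"
proof -
  obtain f0 fi fm where "f0 \<in> D \<and> fi \<in> Ni \<and> fm \<in> Nm \<and> f = f0 + fi + fm" using VN[OF f] by blast
  then have "\<exists>p. fst p \<in> D \<and> fst (snd p) \<in> Ni \<and> snd (snd p) \<in> Nm \<and> f = fst p + fst (snd p) + snd (snd p)"
    by (intro exI[of _ "(f0, fi, fm)"]) simp
  then have "fst (dec f) \<in> D \<and> fst (snd (dec f)) \<in> Ni \<and> snd (snd (dec f)) \<in> Nm \<and> f = fst (dec f) + fst (snd (dec f)) + snd (snd (dec f))"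
    unfolding dec_def by (rule someI_ex)
  then show "cD f \<in> D" "cI f \<in> Ni" "cM f \<in> Nm" "f = cD f + cI f + cM f"
    by (auto simp: cD_def cI_def cM_def)
qed

lemma dec_eq:
  assumes "f0 \<in> D" "fi \<in> Ni" "fm \<in> Nm" and f: "f = f0 + fi + fm"
  shows "cD f = f0" "cI f = fi" "cM f = fm"
proof -
  have fD: "f \<in> Dst"
    using assms D_Dst defect_Dst Dst_add by metis
  note d = dec[OF fD]
  show "cD f = f0" "cI f = fi" "cM f = fm"
    using VN_unique2[OF d(1-3) assms(1-3)] d(4) f by auto
qed

lemma dec_add:
  assumes f: "f \<in> Dst" and g: "g \<in> Dst"
  shows "cI (f + g) = cI f + cI g" "cM (f + g) = cM f + cM g"
proof -
  note df = dec[OF f] and dg = dec[OF g]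
  have e0: "f + g = (cD f + cI f + cM f) + (cD g + cI g + cM g)"
    using df(4) dg(4) by (rule arg_cong2[where f="(+)"])
  have e: "f + g = (cD f + cD g) + (cI f + cI g) + (cM f + cM g)"
    unfolding e0 by (simp add: algebra_simps)
  have m: "cD f + cD g \<in> D" "cI f + cI g \<in> Ni" "cM f + cM g \<in> Nm"
    using df dg csubspace_add[OF Dsub] csubspace_add[OF defect_sub] by auto
  show "cI (f + g) = cI f + cI g" "cM (f + g) = cM f + cM g" using dec_eq[OF m e] by auto
qed

lemma dec_scaleC:
  assumes f: "f \<in> Dst"
  shows "cI (scaleC a f) = scaleC a (cI f)" "cM (scaleC a f) = scaleC a (cM f)"
proof -
  note df = dec[OF f]
  have e: "scaleC a f = scaleC a (cD f) + scaleC a (cI f) + scaleC a (cM f)"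
  proof -
    have "scaleC a f = scaleC a (cD f + cI f + cM f)" using df(4) by (rule arg_cong)
    then show ?thesis by (simp add: scaleC_add_right)
  qed
  have m: "scaleC a (cD f) \<in> D" "scaleC a (cI f) \<in> Ni" "scaleC a (cM f) \<in> Nm"
    using df csubspace_scaleC[OF Dsub] csubspace_scaleC[OF defect_sub] by auto
  show "cI (scaleC a f) = scaleC a (cI f)" "cM (scaleC a f) = scaleC a (cM f)" using dec_eq[OF m e] by auto
qed

lemma T_dec:
  assumes f: "f \<in> Dst"
  shows "T f = A (cD f) + (scaleC \<i> (cI f) - scaleC \<i> (cM f))"
proof -
  note df = dec[OF f]
  have s: "cD f \<in> Dst" "cI f \<in> Dst" "cM f \<in> Dst" using df D_Dst defect_Dst by auto
  have "T f = T (cD f + cI f + cM f)" using df(4) by simp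
  also have "\<dots> = T (cD f) + T (cI f) + T (cM f)"
    using Dst_add[OF Dst_add(1)[OF s(1,2)] s(3)] Dst_add(2)[OF s(1,2)] by simp
  also have "\<dots> = A (cD f) + scaleC \<i> (cI f) + scaleC (- \<i>) (cM f)"
    using D_Dst[OF df(1)] defect_Dst(2)[OF df(2)] defect_Dst(2)[OF df(3)] by simp
  finally show ?thesis by (simp add: scaleC_minus_left)
qed

end

context sop begin

lemma exists_U:
  assumes "equal_nonzero_defect_numbers S"
  shows "\<exists>U. (\<forall>x\<in>Nm. U x \<in> Ni) \<and> (\<forall>x\<in>Nm. \<forall>y\<in>Nm. cinner (U x) (U y) = cinner x y) \<and> Ni \<subseteq> U ` Nm"
proof -
  obtain B1 B2 g where b1: "orthonormal_basis_of B1 Ni" and b2: "orthonormal_basis_of B2 Nm"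
    and g: "bij_betw g B1 B2"
    using assms by (auto simp: equal_nonzero_defect_numbers_def same_hilbert_dim_def)
  show ?thesis by (rule unitary_exists[OF b2 b1 bij_betw_inv_into[OF g] defect_sub])
qed

lemma dpd_mono:
  assumes "defect_space S l \<subseteq> dom_plus_defect S m"
  shows "dom_plus_defect S l \<subseteq> dom_plus_defect S m"
proof
  fix f assume "f \<in> dom_plus_defect S l"
  then obtain f0 g where f0: "f0 \<in> D" and g: "g \<in> defect_space S l" and f: "f = f0 + g"
    by (auto simp: dom_plus_defect_def)
  obtain f1 g1 where f1: "f1 \<in> D" and g1: "g1 \<in> defect_space S m" and ge: "g = f1 + g1"
    using assms g by (auto simp: dom_plus_defect_def)
  have "f = (f0 + f1) + g1" using f ge by (simp add: algebra_simps)
  moreover have "f0 + f1 \<in> D" using csubspace_add[OF Dsub f0 f1] .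
  ultimately show "f \<in> dom_plus_defect S m" using g1 by (auto simp: dom_plus_defect_def)
qed

lemma defect_in_dpd: "defect_space S l \<subseteq> dom_plus_defect S l"
proof
  fix g assume "g \<in> defect_space S l"
  moreover have "g = 0 + g" by simp
  ultimately show "g \<in> dom_plus_defect S l" using csubspace_0[OF Dsub] unfolding dom_plus_defect_def by blast
qed

lemma green_alg:
  fixes a b c d :: "'a::chilbert"
  shows "cinner (scaleC \<i> a - scaleC \<i> b) (c + d) - cinner (a + b) (scaleC \<i> c - scaleC \<i> d)
       = \<i> * (2 * cinner a c - 2 * cinner b d)"
  by (simp add: cinner_add_left cinner_add_right cinner_diff_left cinner_diff_right
      cinner_scaleC_left cinner_scaleC_right algebra_simps)

lemma triplet:
  fixes U :: "'a \<Rightarrow> 'a"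
  assumes UN: "\<forall>x\<in>Nm. U x \<in> Ni" and Up: "\<forall>x\<in>Nm. \<forall>y\<in>Nm. cinner (U x) (U y) = cinner x y"
    and Uo: "Ni \<subseteq> U ` Nm"
  defines "r \<equiv> complex_of_real (sqrt 2)"
  defines "Gp \<equiv> \<lambda>f. scaleC r (cI f)" and "Gm \<equiv> \<lambda>f. scaleC r (U (cM f))"
  shows "boundary_triplet S Ni Gm Gp" "dom_plus_defect S \<i> = {f \<in> Dst. (\<lambda>_. 0) (Gp f) = Gm f}"
proof -
  have pres: "\<And>x y. x \<in> Nm \<Longrightarrow> y \<in> Nm \<Longrightarrow> cinner (U x) (U y) = cinner x y" using Up by blast
  have Uadd: "U (x + y) = U x + U y" if "x \<in> Nm" "y \<in> Nm" for x y
    by (rule iso_add[OF defect_sub pres that])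
  have Usc: "U (scaleC a x) = scaleC a (U x)" if "x \<in> Nm" for x a
    by (rule iso_scaleC[OF defect_sub pres that])
  have U0: "U 0 = 0" using Usc[OF csubspace_0[OF defect_sub], of 0] by simp
  have r0: "r \<noteq> 0" by (simp add: r_def)
  have rr: "r * cnj r = 2" by (simp add: r_def flip: of_real_mult)
  have rr': "cnj r * r = 2" using rr by (simp add: mult.commute)
  have rinv: "r * (1 / r) = 1" using r0 by simp
  have NiS: "csubspace Ni" "closed Ni" by (rule defect_sub, rule defect_closed)
  have c3: "\<forall>f\<in>Dst. Gm f \<in> Ni \<and> Gp f \<in> Ni"
  proof
    fix f assume f: "f \<in> Dst"
    note df = dec[OF f]
    show "Gm f \<in> Ni \<and> Gp f \<in> Ni" unfolding Gm_def Gp_def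
      using UN df(2,3) csubspace_scaleC[OF NiS(1)] by auto
  qed
  have c4: "\<forall>f\<in>Dst. \<forall>g\<in>Dst. Gm (f + g) = Gm f + Gm g \<and> Gp (f + g) = Gp f + Gp g"
  proof (intro ballI)
    fix f g assume f: "f \<in> Dst" and g: "g \<in> Dst"
    note df = dec[OF f] and dg = dec[OF g]
    show "Gm (f + g) = Gm f + Gm g \<and> Gp (f + g) = Gp f + Gp g"
      unfolding Gm_def Gp_def dec_add[OF f g] Uadd[OF df(3) dg(3)] scaleC_add_right by simp
  qed
  have c5: "\<forall>a. \<forall>f\<in>Dst. Gm (scaleC a f) = scaleC a (Gm f) \<and> Gp (scaleC a f) = scaleC a (Gp f)"
  proof (intro allI ballI)
    fix a f assume f: "f \<in> Dst"
    note df = dec[OF f]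
    show "Gm (scaleC a f) = scaleC a (Gm f) \<and> Gp (scaleC a f) = scaleC a (Gp f)"
      unfolding Gm_def Gp_def dec_scaleC[OF f] Usc[OF df(3)] scaleC_mult[symmetric]
      by (simp add: mult.commute)
  qed
  have c6: "\<forall>f\<in>Dst. \<forall>g\<in>Dst. cinner (T f) g - cinner f (T g) = \<i> * (cinner (Gp f) (Gp g) - cinner (Gm f) (Gm g))"
  proof (intro ballI)
    fix f g assume f: "f \<in> Dst" and g: "g \<in> Dst"
    note df = dec[OF f] and dg = dec[OF g]
    define f0 fi fm g0 gi gm where "f0 = cD f" "fi = cI f" "fm = cM f" "g0 = cD g" "gi = cI g" "gm = cM g"
    have m: "f0 \<in> D" "fi \<in> Ni" "fm \<in> Nm" "g0 \<in> D" "gi \<in> Ni" "gm \<in> Nm"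
      using df dg by (auto simp: f0_fi_fm_g0_gi_gm_def)
    have fe: "f = f0 + fi + fm" and ge: "g = g0 + gi + gm" using df(4) dg(4) by (auto simp: f0_fi_fm_g0_gi_gm_def)
    have Tf: "T f = A f0 + (scaleC \<i> fi - scaleC \<i> fm)" and Tg: "T g = A g0 + (scaleC \<i> gi - scaleC \<i> gm)"
      using T_dec[OF f] T_dec[OF g] by (auto simp: f0_fi_fm_g0_gi_gm_def)
    have h1: "cinner (A f0) g0 = cinner f0 (A g0)" using A_sym m by simp
    have h2: "cinner (A f0) (gi + gm) = cinner f0 (scaleC \<i> gi - scaleC \<i> gm)"
    proof -
      have gs: "gi + gm \<in> Dst" "T (gi + gm) = scaleC \<i> gi - scaleC \<i> gm"
        using Dst_add[OF defect_Dst(1)[OF m(5)] defect_Dst(1)[OF m(6)]] defect_Dst(2)[OF m(5)]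
          defect_Dst(2)[OF m(6)] by (auto simp: scaleC_minus_left)
      show ?thesis using adj_prop[OF gs(1) m(1)] gs(2) by simp
    qed
    have h3: "cinner (fi + fm) (A g0) = cinner (scaleC \<i> fi - scaleC \<i> fm) g0"
    proof -
      have fs: "fi + fm \<in> Dst" "T (fi + fm) = scaleC \<i> fi - scaleC \<i> fm"
        using Dst_add[OF defect_Dst(1)[OF m(2)] defect_Dst(1)[OF m(3)]] defect_Dst(2)[OF m(2)]
          defect_Dst(2)[OF m(3)] by (auto simp: scaleC_minus_left)
      show ?thesis using adj_prop'[OF fs(1) m(4)] fs(2) by simp
    qed
    have "cinner (T f) g - cinner f (T g)
        = (cinner (A f0) g0 + cinner (A f0) (gi + gm) + cinner (scaleC \<i> fi - scaleC \<i> fm) g0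
            + cinner (scaleC \<i> fi - scaleC \<i> fm) (gi + gm))
          - (cinner f0 (A g0) + cinner f0 (scaleC \<i> gi - scaleC \<i> gm) + cinner (fi + fm) (A g0)
            + cinner (fi + fm) (scaleC \<i> gi - scaleC \<i> gm))"
      unfolding Tf Tg unfolding fe ge add.assoc cinner_add_left cinner_add_right by (simp add: algebra_simps)
    also have "\<dots> = cinner (scaleC \<i> fi - scaleC \<i> fm) (gi + gm) - cinner (fi + fm) (scaleC \<i> gi - scaleC \<i> gm)"
      unfolding h1 h2 h3 by (simp add: algebra_simps)
    also have "\<dots> = \<i> * (2 * cinner fi gi - 2 * cinner fm gm)" by (rule green_alg)
    also have "\<dots> = \<i> * (cinner (Gp f) (Gp g) - cinner (Gm f) (Gm g))"
      unfolding Gp_def Gm_def cinner_scaleC_left cinner_scaleC_right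
      using pres[OF m(3) m(6)] by (simp add: f0_fi_fm_g0_gi_gm_def mult.assoc[symmetric] rr rr')
    finally show "cinner (T f) g - cinner f (T g) = \<i> * (cinner (Gp f) (Gp g) - cinner (Gm f) (Gm g))" .
  qed
  have c7: "\<forall>h1\<in>Ni. \<forall>h2\<in>Ni. \<exists>f\<in>Dst. Gm f = h1 \<and> Gp f = h2"
  proof (intro ballI)
    fix h1 h2 assume h1: "h1 \<in> Ni" and h2: "h2 \<in> Ni"
    obtain x where x: "x \<in> Nm" and ux: "U x = h1" using Uo h1 by blast
    define f where "f = 0 + scaleC (1 / r) h2 + scaleC (1 / r) x"
    have m: "0 \<in> D" "scaleC (1 / r) h2 \<in> Ni" "scaleC (1 / r) x \<in> Nm"
      using csubspace_0[OF Dsub] csubspace_scaleC[OF defect_sub] h2 x by auto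
    note de = dec_eq[OF m f_def]
    have fD: "f \<in> Dst" unfolding f_def using m D_Dst defect_Dst Dst_add by metis
    have "Gm f = h1" unfolding Gm_def de Usc[OF x] scaleC_mult[symmetric] rinv ux by (simp add: scaleC_one)
    moreover have "Gp f = h2" unfolding Gp_def de scaleC_mult[symmetric] rinv by (simp add: scaleC_one)
    ultimately show "\<exists>f\<in>Dst. Gm f = h1 \<and> Gp f = h2" using fD by blast
  qed
  show "boundary_triplet S Ni Gm Gp"
    unfolding boundary_triplet_def using NiS c3 c4 c5 c6 c7 by blast
  show "dom_plus_defect S \<i> = {f \<in> Dst. (\<lambda>_. 0) (Gp f) = Gm f}"
  proof (intro set_eqI iffI)
    fix f assume "f \<in> dom_plus_defect S \<i>"
    then obtain f0 g where f0: "f0 \<in> D" and g: "g \<in> Ni" and f: "f = f0 + g"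
      by (auto simp: dom_plus_defect_def)
    have f': "f = f0 + g + 0" using f by simp
    note de = dec_eq[OF f0 g csubspace_0[OF defect_sub] f']
    have fD: "f \<in> Dst" using f f0 g D_Dst defect_Dst Dst_add by metis
    show "f \<in> {f \<in> Dst. (\<lambda>_. 0) (Gp f) = Gm f}" using fD by (simp add: Gm_def de U0)
  next
    fix f assume "f \<in> {f \<in> Dst. (\<lambda>_. 0) (Gp f) = Gm f}"
    then have fD: "f \<in> Dst" and z: "0 = scaleC r (U (cM f))" by (auto simp: Gm_def)
    note df = dec[OF fD]
    have "cmod r * norm (U (cM f)) = 0" using z norm_scaleC[of r "U (cM f)"] by simp
    then have "norm (U (cM f)) = 0" using r0 by simp
    then have "norm (cM f) = 0" using iso_norm[of U "cM f"] pres[OF df(3) df(3)] by simp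
    then have "cM f = 0" by simp
    then have "f = cD f + cI f" using df(4) by simp
    then show "f \<in> dom_plus_defect S \<i>" using df(1,2) by (auto simp: dom_plus_defect_def)
  qed
qed

end

theorem theorem3p1:
  fixes S :: "'a::chilbert op"
  assumes "separable_space TYPE('a)"
    and "linear_op S" and "closed_op S" and "densely_defined S" and "symmetric_op S"
    and "equal_nonzero_defect_numbers S"
  shows "phillips_symmetric S \<longleftrightarrow>
    (\<forall>l m. Im l > 0 \<longrightarrow> Im m > 0 \<longrightarrow> defect_space S l \<subseteq> dom_plus_defect S m)"
proof -
  interpret sop S using assms(2-5) by unfold_locales
  show ?thesis
  proof
    assume "phillips_symmetric S"
    then obtain Hb Gm Gp \<Theta> where th: "\<forall>l. Im l > 0 \<longrightarrow> is_char_fun_value S Hb Gm Gp l \<Theta>"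
      by (auto simp: phillips_symmetric_def)
    show "\<forall>l m. Im l > 0 \<longrightarrow> Im m > 0 \<longrightarrow> defect_space S l \<subseteq> dom_plus_defect S m"
    proof (intro allI impI)
      fix l m :: complex assume l: "Im l > 0" and m: "Im m > 0"
      have "dom_plus_defect S l = dom_plus_defect S m"
        using th l m by (auto simp: is_char_fun_value_def)
      then show "defect_space S l \<subseteq> dom_plus_defect S m" using defect_in_dpd[of l] by simp
    qed
  next
    assume H: "\<forall>l m. Im l > 0 \<longrightarrow> Im m > 0 \<longrightarrow> defect_space S l \<subseteq> dom_plus_defect S m"
    obtain U where U: "\<forall>x\<in>Nm. U x \<in> Ni" "\<forall>x\<in>Nm. \<forall>y\<in>Nm. cinner (U x) (U y) = cinner x y" "Ni \<subseteq> U ` Nm"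
      using exists_U[OF assms(6)] by blast
    define r where "r = complex_of_real (sqrt 2)"
    define Gp where "Gp = (\<lambda>f. scaleC r (cI f))"
    define Gm where "Gm = (\<lambda>f. scaleC r (U (cM f)))"
    have bt: "boundary_triplet S Ni Gm Gp" and eq: "dom_plus_defect S \<i> = {f \<in> Dst. (\<lambda>_. 0) (Gp f) = Gm f}"
      using triplet[OF U] unfolding r_def Gp_def Gm_def by auto
    have bo: "bounded_op_on Ni (\<lambda>_. 0)"
      unfolding bounded_op_on_def using csubspace_0[OF defect_sub] by (auto intro!: exI[of _ 0])
    have "is_char_fun_value S Ni Gm Gp l (\<lambda>_. 0)" if l: "Im l > 0" for l
    proof -
      have "dom_plus_defect S l = dom_plus_defect S \<i>"
        using dpd_mono H l by (intro equalityI) auto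
      then show ?thesis using bo eq by (simp add: is_char_fun_value_def)
    qed
    then show "phillips_symmetric S"
      unfolding phillips_symmetric_def using assms(2-6) bt by blast
  qed
qed

end
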